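(* Let $p>3$ be a prime and $f:V_n^{(p)}\to\mathbb{F}_p$ a function with $f(0)=0$. Suppose that for every $a\in\mathbb{F}_p^*$ there is an even integer $l_a$ with $2\le l_a\le p-1$ such that $f(ax)=a^{l_a}f(x)$ for all $x\in V_n^{(p)}$. Then the defining-set codes $\mathcal{C}_{D_{f,0}\setminus\{0\}}$, $\mathcal{C}_{D_{f,sq}}$ and $\mathcal{C}_{D_{f,nsq}}$ are self-orthogonal.
   Context: $V_n^{(p)}$ is an $n$-dimensional $\mathbb{F}_p$-vector space with a non-degenerate symmetric bilinear form $\langle\cdot,\cdot\rangle_n$; $\mathbb{F}_p^*=\mathbb{F}_p\setminus\{0\}$; $SQ$ and $NSQ$ are the nonzero squares and nonsquares of $\mathbb{F}_p$. $D_{f,0}=\{x:f(x)=0\}$, $D_{f,sq}=\{x:f(x)\in SQ\}$, $D_{f,nsq}=\{x:f(x)\in NSQ\}$. For $D=\{x_1,\dots,x_m\}\subseteq V_n^{(p)}$, $\mathcal{C}_D=\{(\langle a,x_1\rangle_n,\dots,\langle a,x_m\rangle_n):a\in V_n^{(p)}\}$. A linear code is self-orthogonal if $\mathcal{C}\subseteq\mathcal{C}^\perp$ with respect to the standard dot product. *)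

theory Defs
  imports "Berlekamp_Zassenhaus.Finite_Field"
begin

text \<open>F_p is the type 'p mod_ring with CARD('p) = p prime; V_n^{(p)} is the
  space of functions 'n \<Rightarrow> 'p mod_ring over a finite index type 'n of size n,
  with pointwise addition and scalar multiplication.\<close>

type_synonym ('p, 'n) vecsp = "'n \<Rightarrow> 'p mod_ring"

definition vzero :: "('p::prime_card, 'n::finite) vecsp" where
  "vzero = (\<lambda>i. 0)"

definition vadd :: "('p::prime_card, 'n::finite) vecsp \<Rightarrow> ('p, 'n) vecsp \<Rightarrow> ('p, 'n) vecsp" where
  "vadd x y = (\<lambda>i. x i + y i)"

definition vscale :: "'p::prime_card mod_ring \<Rightarrow> ('p, 'n::finite) vecsp \<Rightarrow> ('p, 'n) vecsp" where
  "vscale c x = (\<lambda>i. c * x i)"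

definition nondeg_sym_bilinear :: "(('p::prime_card, 'n::finite) vecsp \<Rightarrow> ('p, 'n) vecsp \<Rightarrow> 'p mod_ring) \<Rightarrow> bool" where
  "nondeg_sym_bilinear B \<longleftrightarrow>
     (\<forall>x y. B x y = B y x) \<and>
     (\<forall>x y z. B (vadd x y) z = B x z + B y z) \<and>
     (\<forall>c x z. B (vscale c x) z = c * B x z) \<and>
     (\<forall>x. (\<forall>y. B x y = 0) \<longrightarrow> x = vzero)"

definition SQ :: "'p::prime_card mod_ring set" where
  "SQ = {y. y \<noteq> 0 \<and> (\<exists>z. y = z ^ 2)}"

definition NSQ :: "'p::prime_card mod_ring set" where
  "NSQ = {y. y \<noteq> 0 \<and> y \<notin> SQ}"

definition D_zero :: "(('p::prime_card, 'n::finite) vecsp \<Rightarrow> 'p mod_ring) \<Rightarrow> ('p, 'n) vecsp set" where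
  "D_zero f = {x. f x = 0}"

definition D_sq :: "(('p::prime_card, 'n::finite) vecsp \<Rightarrow> 'p mod_ring) \<Rightarrow> ('p, 'n) vecsp set" where
  "D_sq f = {x. f x \<in> SQ}"

definition D_nsq :: "(('p::prime_card, 'n::finite) vecsp \<Rightarrow> 'p mod_ring) \<Rightarrow> ('p, 'n) vecsp set" where
  "D_nsq f = {x. f x \<in> NSQ}"

text \<open>The code C_D: codewords are indexed by the elements of D (coordinates
  outside D are fixed to 0; the ordering of D is irrelevant for orthogonality).\<close>
definition code_of :: "(('p::prime_card, 'n::finite) vecsp \<Rightarrow> ('p, 'n) vecsp \<Rightarrow> 'p mod_ring)
    \<Rightarrow> ('p, 'n) vecsp set \<Rightarrow> (('p, 'n) vecsp \<Rightarrow> 'p mod_ring) set" where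
  "code_of B D = {(\<lambda>x. if x \<in> D then B a x else 0) | a. True}"

definition self_orthogonal :: "'x set \<Rightarrow> ('x \<Rightarrow> 'a::comm_ring_1) set \<Rightarrow> bool" where
  "self_orthogonal D C \<longleftrightarrow> (\<forall>c\<in>C. \<forall>c'\<in>C. (\<Sum>x\<in>D. c x * c' x) = 0)"

end

theory Submission
  imports Defs
begin

lemma aux3: "(of_nat 3 :: 'a::comm_ring_1) = 2^2 - 1"
  by (simp add: power2_eq_square)

lemma aux_fix_zero:
  fixes s k :: "'a::field"
  assumes "s = k * s" "k \<noteq> 1"
  shows "s = 0"
proof -
  have "(k - 1) * s = 0" by (simp add: left_diff_distrib assms(1)[symmetric])
  thus ?thesis using assms(2) by simp
qed

lemma sum_zero_scaled:
  fixes B :: "('p::prime_card, 'n::finite) vecsp \<Rightarrow> ('p, 'n) vecsp \<Rightarrow> 'p mod_ring"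
    and D :: "('p, 'n) vecsp set" and c :: "'p mod_ring"
  assumes B: "nondeg_sym_bilinear B"
    and c0: "c \<noteq> 0" and c2: "c^2 \<noteq> 1"
    and inv: "\<And>d x. d \<noteq> 0 \<Longrightarrow> x \<in> D \<Longrightarrow> vscale d x \<in> D"
  shows "self_orthogonal D (code_of B D)"
  unfolding self_orthogonal_def code_of_def
proof (intro ballI)
  fix u v
  assume "u \<in> {(\<lambda>x. if x \<in> D then B a x else 0) | a. True}"
    and "v \<in> {(\<lambda>x. if x \<in> D then B a x else 0) | a. True}"
  then obtain a b where u: "u = (\<lambda>x. if x \<in> D then B a x else 0)"
    and v: "v = (\<lambda>x. if x \<in> D then B b x else 0)" by blast
  have lin: "B y (vscale d x) = d * B y x" for y d x
  proof -
    have s: "B u v = B v u" for u v using B unfolding nondeg_sym_bilinear_def by blast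
    have m: "B (vscale d x) y = d * B x y" using B unfolding nondeg_sym_bilinear_def by blast
    have "B y (vscale d x) = B (vscale d x) y" by (rule s)
    also have "\<dots> = d * B x y" by (rule m)
    also have "B x y = B y x" by (rule s)
    finally show ?thesis .
  qed
  have bij: "bij_betw (vscale c) D D"
  proof (rule bij_betwI[where g = "vscale (inverse c)"])
    show "vscale c \<in> D \<rightarrow> D" using inv c0 by auto
    show "vscale (inverse c) \<in> D \<rightarrow> D" using inv c0 by auto
    show "vscale (inverse c) (vscale c x) = x" for x
      using c0 by (simp add: vscale_def field_simps)
    show "vscale c (vscale (inverse c) x) = x" for x
      using c0 by (simp add: vscale_def field_simps)
  qed
  let ?S = "\<Sum>x\<in>D. B a x * B b x"
  have e1: "(\<Sum>x\<in>D. u x * v x) = ?S"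
    by (rule sum.cong) (simp_all add: u v)
  have r1: "?S = (\<Sum>x\<in>D. B a (vscale c x) * B b (vscale c x))"
    using sum.reindex_bij_betw[OF bij, of "\<lambda>x. B a x * B b x"] by simp
  also have "\<dots> = c^2 * ?S"
  proof -
    have "B a (vscale c x) * B b (vscale c x) = c^2 * (B a x * B b x)" for x
      unfolding lin by (simp add: power2_eq_square)
    thus ?thesis by (simp add: sum_distrib_left)
  qed
  finally have "?S = c^2 * ?S" .
  hence "?S = 0" using c2 by (rule aux_fix_zero)
  thus "(\<Sum>x\<in>D. u x * v x) = 0"
    using e1 by simp
qed

theorem lemma14:
  fixes B :: "('p::prime_card, 'n::finite) vecsp \<Rightarrow> ('p, 'n) vecsp \<Rightarrow> 'p mod_ring"
    and f :: "('p, 'n) vecsp \<Rightarrow> 'p mod_ring"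
  assumes "CARD('p) > 3"
    and "nondeg_sym_bilinear B"
    and "f vzero = 0"
    and "\<forall>a::'p mod_ring. a \<noteq> 0 \<longrightarrow>
           (\<exists>l::nat. even l \<and> 2 \<le> l \<and> l \<le> CARD('p) - 1 \<and>
              (\<forall>x. f (vscale a x) = a ^ l * f x))"
  shows "self_orthogonal (D_zero f - {vzero}) (code_of B (D_zero f - {vzero}))
       \<and> self_orthogonal (D_sq f) (code_of B (D_sq f))
       \<and> self_orthogonal (D_nsq f) (code_of B (D_nsq f))"
proof -
  have c0: "(2::'p mod_ring) \<noteq> 0"
  proof
    assume h: "(2::'p mod_ring) = 0"
    have "of_nat 2 = (0::'p mod_ring)" using h by (simp only: of_nat_numeral)
    hence "CARD('p) dvd 2" by (rule of_nat_0_mod_ring_dvd)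
    hence "CARD('p) \<le> 2" by (rule dvd_imp_le) simp
    with assms(1) show False by linarith
  qed
  have c2: "(2::'p mod_ring)^2 \<noteq> 1"
  proof
    assume h: "(2::'p mod_ring)^2 = 1"
    have "of_nat 3 = (0::'p mod_ring)" using aux3[where 'a="'p mod_ring"] h by (simp only: right_minus_eq)
    hence "CARD('p) dvd 3" by (rule of_nat_0_mod_ring_dvd)
    hence "CARD('p) \<le> 3" by (rule dvd_imp_le) simp
    with assms(1) show False by linarith
  qed
  have sc: "\<exists>w. w \<noteq> 0 \<and> f (vscale d x) = w^2 * f x" if d0: "d \<noteq> 0" for d x
  proof -
    have "\<exists>l::nat. even l \<and> 2 \<le> l \<and> l \<le> CARD('p) - 1 \<and>
              (\<forall>x. f (vscale d x) = d ^ l * f x)"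
      using assms(4) d0 by simp
    then obtain l where l1: "even l" and l2: "\<forall>x. f (vscale d x) = d ^ l * f x"
      by blast
    from l1 obtain k where k: "l = 2 * k" by (rule evenE)
    have e: "f (vscale d x) = (d^k)^2 * f x"
      using l2 unfolding k power_even_eq by simp
    have "d^k \<noteq> 0" using d0 by simp
    with e show ?thesis by blast
  qed
  have vz: "vscale d x = vzero \<Longrightarrow> d \<noteq> 0 \<Longrightarrow> x = vzero" for d x
  proof -
    assume h: "vscale d x = vzero" and d: "d \<noteq> 0"
    show "x = vzero" unfolding vzero_def
    proof
      fix i
      have "d * x i = 0" using fun_cong[OF h, of i] by (simp add: vscale_def vzero_def)
      thus "x i = 0" using d by simp
    qed
  qed
  have i1: "vscale d x \<in> D_zero f - {vzero}" if d0: "d \<noteq> 0" and xD: "x \<in> D_zero f - {vzero}" for d x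
    using sc[OF d0, of x] d0 xD vz unfolding D_zero_def by auto
  have i2: "vscale d x \<in> D_sq f" if d0: "d \<noteq> 0" and xD: "x \<in> D_sq f" for d x
  proof -
    obtain w where w: "w \<noteq> 0" "f (vscale d x) = w^2 * f x" using sc[OF d0] by blast
    obtain z where z: "f x \<noteq> 0" "f x = z^2" using xD unfolding D_sq_def SQ_def by blast
    have "f (vscale d x) = (w * z)^2" using w(2) z(2) by (simp add: power_mult_distrib)
    moreover have "f (vscale d x) \<noteq> 0" using w z(1) by simp
    ultimately show ?thesis unfolding D_sq_def SQ_def by blast
  qed
  have i3: "vscale d x \<in> D_nsq f" if d0: "d \<noteq> 0" and xD: "x \<in> D_nsq f" for d x
  proof -
    obtain w where w: "w \<noteq> 0" "f (vscale d x) = w^2 * f x" using sc[OF d0] by blast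
    have z: "f x \<noteq> 0" "\<And>z. f x \<noteq> z^2" using xD unfolding D_nsq_def NSQ_def SQ_def by blast+
    have "f (vscale d x) \<noteq> z^2" for z
    proof
      assume "f (vscale d x) = z^2"
      hence "w^2 * f x = z^2" using w(2) by simp
      hence "f x = z^2 / w^2" using w(1) by (simp add: field_simps)
      hence "f x = (z / w)^2" by (simp add: power_divide)
      with z(2) show False by blast
    qed
    moreover have "f (vscale d x) \<noteq> 0" using w z(1) by simp
    ultimately show ?thesis unfolding D_nsq_def NSQ_def SQ_def by blast
  qed
  show ?thesis
    using sum_zero_scaled[OF assms(2) c0 c2] i1 i2 i3 by blast
qed

end
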